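(* Let $k\ge3$, $1\le s\le k$, $r\le\min\{n_1,\dots,n_s\}$, $\mathcal A\in\mathbb R^{n_1}\otimes\cdots\otimes\mathbb R^{n_k}$ nonzero, and let $\{U_{[p]}\}$ be generated by the iAPD-ALS algorithm (described in the context). Then the number of columns of the matrices $U^{(i)}_{[p]}$ is eventually constant, equal to some positive integer $t\le r$, and there exists $N_0$ such that $f(U_{[p]})$ is nondecreasing in $p$ for all $p\ge N_0$.
   Context: Notation. $\mathrm V(m,n)=\{U\in\mathbb R^{n\times m}:U^{\mathsf T}U=I_m\}$; $\mathrm B(m,n)$: $n\times m$ real matrices with unit columns. $\mathcal A\tau(\mathbf u_1,\dots,\mathbf u_k)=\langle\mathcal A,\mathbf u_1\otimes\cdots\otimes\mathbf u_k\rangle$; $\mathcal A\tau_i(\mathbf u_1,\dots,\mathbf u_k)\in\mathbb R^{n_i}$ is the contraction of $\mathcal A$ with all $\mathbf u_l$, $l\ne i$. For $U=(U^{(1)},\dots,U^{(k)})$ with columns $\mathbf u^{(i)}_j$, $j\le t$: $f(U)=\sum_j\mathcal A\tau(\mathbf u^{(1)}_j,\dots,\mathbf u^{(k)}_j)^2$. $\operatorname{Polar}(X)$ is the set of $Q\in\mathrm V(m,n)$ maximizing $\langle Q,X\rangle$. iAPD-ALS algorithm (input $\mathcal A$, $r$, $\epsilon>0$). Choose $U_{[0]}\in\mathrm V(r,n_1)\times\cdots\times\mathrm V(r,n_s)\times\mathrm B(r,n_{s+1})\times\cdots\times\mathrm B(r,n_k)$ with $f(U_{[0]})>0$ and $\kappa\in(0,\sqrt{f(U_{[0]})/r})$.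 For $p=1,2,\dots$ ($t$ = current number of columns, $\mathbf u^{(i)}_{j,[q]}$ = $j$-th column of $U^{(i)}_{[q]}$), let $\mathbf x^i_{j,[p]}=(\mathbf u^{(1)}_{j,[p]},\dots,\mathbf u^{(i-1)}_{j,[p]},\mathbf u^{(i)}_{j,[p-1]},\dots,\mathbf u^{(k)}_{j,[p-1]})$, $\lambda^{i-1}_{j,[p]}=\mathcal A\tau(\mathbf x^i_{j,[p]})$, $\Lambda^{(i)}_{[p]}=\operatorname{diag}(\lambda^{i-1}_{j,[p]})_j$, $V^{(i)}_{[p]}=[\mathcal A\tau_i(\mathbf x^i_{j,[p]})]_j$. (1) For $i=1,\dots,s$ in turn pick $U^{(i)}_{[p]}\in\operatorname{Polar}(V^{(i)}_{[p]}\Lambda^{(i)}_{[p]})$, and if the smallest eigenvalue of $(U^{(i)}_{[p]})^{\mathsf T}V^{(i)}_{[p]}\Lambda^{(i)}_{[p]}$ is $<\epsilon$, instead pick $U^{(i)}_{[p]}\in\operatorname{Polar}(V^{(i)}_{[p]}\Lambda^{(i)}_{[p]}+\epsilon U^{(i)}_{[p-1]})$. (2) Truncation: with $J=\{j:|((U^{(s)}_{[p]})^{\mathsf T}V^{(s)}_{[p]})_{jj}|<\kappa\}$, delete columns in $J$ from $U^{(1)}_{[p]},\dots,U^{(s)}_{[p]}$ and $U^{(s+1)}_{[p-1]},\dots,U^{(k)}_{[p-1]}$ and set $t:=t-|J|$. (3) For $i=s+1,\dots,k$ in turn, $\mathbf u^{(i)}_{j,[p]}=\operatorname{sgn}(\lambda^{i-1}_{j,[p]})\mathcal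 A\tau_i(\mathbf x^i_{j,[p]})/\|\mathcal A\tau_i(\mathbf x^i_{j,[p]})\|$. Set $U_{[p]}=(U^{(1)}_{[p]},\dots,U^{(k)}_{[p]})$ and iterate indefinitely. *)

theory Defs
  imports Complex_Main "HOL-Library.FuncSet"
begin

text \<open>Modes are indexed 0..<k (mode i here is mode i+1 of the paper),
  the first s modes (i < s) carry Stiefel factors, modes s..<k carry unit-column factors.
  A tensor is a function on multi-indices; only indices in the box
  idx i < n i (i < k) matter. A vector of R^m is a function nat => real, of which
  only the entries 0..<m matter. A factor matrix with columns labelled by a finite
  set T of labels is a function Q :: nat => nat => real, Q j l = entry in row l of
  column j. Column deletion is modelled by shrinking the label set.\<close>

definition idxs :: "nat \<Rightarrow> (nat \<Rightarrow> nat) \<Rightarrow> (nat \<Rightarrow> nat) set" where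
  "idxs k n = Pi\<^sub>E {..<k} (\<lambda>i. {..<n i})"

definition contr :: "nat \<Rightarrow> (nat \<Rightarrow> nat) \<Rightarrow> ((nat \<Rightarrow> nat) \<Rightarrow> real)
     \<Rightarrow> (nat \<Rightarrow> nat \<Rightarrow> real) \<Rightarrow> real" where
  "contr k n A u = (\<Sum>idx\<in>idxs k n. A idx * (\<Prod>m<k. u m (idx m)))"

definition contr_i :: "nat \<Rightarrow> (nat \<Rightarrow> nat) \<Rightarrow> ((nat \<Rightarrow> nat) \<Rightarrow> real)
     \<Rightarrow> nat \<Rightarrow> (nat \<Rightarrow> nat \<Rightarrow> real) \<Rightarrow> nat \<Rightarrow> real" where
  "contr_i k n A i u l =
     (if l < n i then (\<Sum>idx\<in>{idx\<in>idxs k n. idx i = l}. A idx * (\<Prod>m\<in>{..<k}-{i}. u m (idx m)))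
      else 0)"

definition vnorm :: "nat \<Rightarrow> (nat \<Rightarrow> real) \<Rightarrow> real" where
  "vnorm m v = sqrt (\<Sum>l<m. (v l)\<^sup>2)"

definition stiefel :: "nat \<Rightarrow> nat set \<Rightarrow> (nat \<Rightarrow> nat \<Rightarrow> real) \<Rightarrow> bool" where
  "stiefel m T Q \<longleftrightarrow> (\<forall>j\<in>T. \<forall>j'\<in>T. (\<Sum>l<m. Q j l * Q j' l) = (if j = j' then 1 else 0))"

definition unitcols :: "nat \<Rightarrow> nat set \<Rightarrow> (nat \<Rightarrow> nat \<Rightarrow> real) \<Rightarrow> bool" where
  "unitcols m T Q \<longleftrightarrow> (\<forall>j\<in>T. (\<Sum>l<m. (Q j l)\<^sup>2) = 1)"

definition frob :: "nat \<Rightarrow> nat set \<Rightarrow> (nat \<Rightarrow> nat \<Rightarrow> real) \<Rightarrow> (nat \<Rightarrow> nat \<Rightarrow> real) \<Rightarrow> real" where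
  "frob m T Q X = (\<Sum>j\<in>T. \<Sum>l<m. Q j l * X j l)"

definition Polar :: "nat \<Rightarrow> nat set \<Rightarrow> (nat \<Rightarrow> nat \<Rightarrow> real) \<Rightarrow> (nat \<Rightarrow> nat \<Rightarrow> real) set" where
  "Polar m T X = {Q. stiefel m T Q \<and> (\<forall>Q'. stiefel m T Q' \<longrightarrow> frob m T Q' X \<le> frob m T Q X)}"

definition gram :: "nat \<Rightarrow> (nat \<Rightarrow> nat \<Rightarrow> real) \<Rightarrow> (nat \<Rightarrow> nat \<Rightarrow> real) \<Rightarrow> nat \<Rightarrow> nat \<Rightarrow> real" where
  "gram m Q X = (\<lambda>j j'. \<Sum>l<m. Q j l * X j' l)"

definition is_eig :: "nat set \<Rightarrow> (nat \<Rightarrow> nat \<Rightarrow> real) \<Rightarrow> real \<Rightarrow> bool" where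
  "is_eig T M \<mu> \<longleftrightarrow> (\<exists>x. (\<exists>j\<in>T. x j \<noteq> 0) \<and> (\<forall>j\<in>T. (\<Sum>j'\<in>T. M j j' * x j') = \<mu> * x j))"

definition min_eig :: "nat set \<Rightarrow> (nat \<Rightarrow> nat \<Rightarrow> real) \<Rightarrow> real" where
  "min_eig T M = Min {\<mu>. is_eig T M \<mu>}"

definition fobj :: "nat \<Rightarrow> (nat \<Rightarrow> nat) \<Rightarrow> ((nat \<Rightarrow> nat) \<Rightarrow> real)
     \<Rightarrow> nat set \<Rightarrow> (nat \<Rightarrow> nat \<Rightarrow> nat \<Rightarrow> real) \<Rightarrow> real" where
  "fobj k n A T U = (\<Sum>j\<in>T. (contr k n A (\<lambda>m. U m j))\<^sup>2)"

text \<open>Iterates: U p i j l (iteration p, mode i, column label j, row l); S p the active labels.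
  x^i_{j,[p]}: modes m < i from iteration p, modes m >= i from iteration p-1.\<close>
definition xv :: "(nat \<Rightarrow> nat \<Rightarrow> nat \<Rightarrow> nat \<Rightarrow> real) \<Rightarrow> nat \<Rightarrow> nat \<Rightarrow> nat \<Rightarrow> nat \<Rightarrow> nat \<Rightarrow> real" where
  "xv U p i j = (\<lambda>m. if m < i then U p m j else U (p - 1) m j)"

definition lam where
  "lam k n A U p i j = contr k n A (xv U p i j)"

definition Vcol where
  "Vcol k n A U p i j = contr_i k n A i (xv U p i j)"

definition Xmat where
  "Xmat k n A U p i = (\<lambda>j l. Vcol k n A U p i j l * lam k n A U p i j)"

definition iAPD_ALS ::
  "nat \<Rightarrow> nat \<Rightarrow> (nat \<Rightarrow> nat) \<Rightarrow> ((nat \<Rightarrow> nat) \<Rightarrow> real) \<Rightarrow> nat \<Rightarrow> real \<Rightarrow> real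
   \<Rightarrow> (nat \<Rightarrow> nat set) \<Rightarrow> (nat \<Rightarrow> nat \<Rightarrow> nat \<Rightarrow> nat \<Rightarrow> real) \<Rightarrow> bool" where
  "iAPD_ALS k s n A r \<epsilon> \<kappa> S U \<longleftrightarrow>
     \<comment> \<open>initialization\<close>
     S 0 = {..<r} \<and>
     (\<forall>i<s. stiefel (n i) {..<r} (U 0 i)) \<and>
     (\<forall>i. s \<le> i \<and> i < k \<longrightarrow> unitcols (n i) {..<r} (U 0 i)) \<and>
     fobj k n A (S 0) (U 0) > 0 \<and>
     0 < \<kappa> \<and> \<kappa> < sqrt (fobj k n A (S 0) (U 0) / real r) \<and>
     \<comment> \<open>iterations p = 1, 2, ...\<close>
     (\<forall>p\<ge>1.
        \<comment> \<open>(1) polar decomposition steps for modes i < s\<close>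
        (\<forall>i<s.
           (U p i \<in> Polar (n i) (S (p - 1)) (Xmat k n A U p i) \<and>
            \<not> min_eig (S (p - 1)) (gram (n i) (U p i) (Xmat k n A U p i)) < \<epsilon>)
         \<or> (\<exists>Q\<in>Polar (n i) (S (p - 1)) (Xmat k n A U p i).
              min_eig (S (p - 1)) (gram (n i) Q (Xmat k n A U p i)) < \<epsilon> \<and>
              U p i \<in> Polar (n i) (S (p - 1))
                 (\<lambda>j l. Xmat k n A U p i j l + \<epsilon> * U (p - 1) i j l))) \<and>
        \<comment> \<open>(2) truncation, using the last Stiefel mode s-1\<close>
        S p = {j\<in>S (p - 1).
                 \<not> \<bar>\<Sum>l<n (s - 1). U p (s - 1) j l * Vcol k n A U p (s - 1) j l\<bar> < \<kappa>} \<and>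
        \<comment> \<open>(3) normalized power steps for modes s..<k\<close>
        (\<forall>i. s \<le> i \<and> i < k \<longrightarrow>
           (\<forall>j\<in>S p. \<forall>l<n i.
              U p i j l = sgn (lam k n A U p i j) * Vcol k n A U p i j l
                           / vnorm (n i) (Vcol k n A U p i j))))"

end

theory Submission imports Defs  begin

lemma contr_split:
  assumes "i < k"
  shows "contr k n A u = (\<Sum>l<n i. u i l * contr_i k n A i u l)"
proof -
  have fin: "finite (idxs k n)" unfolding idxs_def by (simp add: finite_PiE)
  have img: "(\<lambda>idx. idx i) ` idxs k n \<subseteq> {..<n i}"
    using assms unfolding idxs_def by (auto simp: PiE_iff)
  have "contr k n A u = (\<Sum>l<n i. \<Sum>idx\<in>{idx\<in>idxs k n. idx i = l}. A idx * (\<Prod>m<k. u m (idx m)))"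
    unfolding contr_def using sum.group[OF fin finite_lessThan img, symmetric] by simp
  also have "\<dots> = (\<Sum>l<n i. u i l * contr_i k n A i u l)"
  proof (rule sum.cong[OF refl])
    fix l assume l: "l \<in> {..<n i}"
    have "(\<Sum>idx\<in>{idx\<in>idxs k n. idx i = l}. A idx * (\<Prod>m<k. u m (idx m)))
        = (\<Sum>idx\<in>{idx\<in>idxs k n. idx i = l}. u i l * (A idx * (\<Prod>m\<in>{..<k}-{i}. u m (idx m))))"
    proof (rule sum.cong[OF refl])
      fix idx assume "idx \<in> {idx\<in>idxs k n. idx i = l}"
      hence e: "idx i = l" by simp
      have "(\<Prod>m<k. u m (idx m)) = u i (idx i) * (\<Prod>m\<in>{..<k}-{i}. u m (idx m))"
        using assms by (subst prod.remove[of _ i]) auto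
      thus "A idx * (\<Prod>m<k. u m (idx m)) = u i l * (A idx * (\<Prod>m\<in>{..<k}-{i}. u m (idx m)))"
        using e by simp
    qed
    also have "\<dots> = u i l * contr_i k n A i u l"
      using l unfolding contr_i_def by (simp add: sum_distrib_left)
    finally show "(\<Sum>idx\<in>{idx\<in>idxs k n. idx i = l}. A idx * (\<Prod>m<k. u m (idx m))) = u i l * contr_i k n A i u l" .
  qed
  finally show ?thesis .
qed

lemma contr_i_cong:
  assumes "\<And>m. m \<noteq> i \<Longrightarrow> u m = v m"
  shows "contr_i k n A i u = contr_i k n A i v"
proof -
  have eq: "\<And>idx. (\<Prod>m\<in>{..<k}-{i}. u m (idx m)) = (\<Prod>m\<in>{..<k}-{i}. v m (idx m))"
    by (rule prod.cong) (auto simp: assms)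
  show ?thesis unfolding contr_i_def by (simp only: eq)
qed

lemma contr_cong:
  assumes "\<And>m. m < k \<Longrightarrow> u m = v m"
  shows "contr k n A u = contr k n A v"
proof -
  have eq: "\<And>idx. (\<Prod>m<k. u m (idx m)) = (\<Prod>m<k. v m (idx m))"
    by (rule prod.cong) (auto simp: assms)
  show ?thesis unfolding contr_def by (simp only: eq)
qed

lemma lam_i:
  "i < k \<Longrightarrow> lam k n A U p i j = (\<Sum>l<n i. U (p-1) i j l * Vcol k n A U p i j l)"
  unfolding lam_def Vcol_def by (subst contr_split[of i k]) (auto simp: xv_def)

lemma lam_Suc:
  assumes "i < k"
  shows "lam k n A U p (Suc i) j = (\<Sum>l<n i. U p i j l * Vcol k n A U p i j l)"
proof -
  have "contr_i k n A i (xv U p (Suc i) j) = contr_i k n A i (xv U p i j)"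
    by (rule contr_i_cong) (auto simp: xv_def)
  thus ?thesis
    unfolding lam_def Vcol_def using assms by (subst contr_split[of i k]) (auto simp: xv_def)
qed

lemma amgm_sum:
  fixes a b :: "nat \<Rightarrow> real"
  shows "(\<Sum>j\<in>T. a j * b j) \<le> ((\<Sum>j\<in>T. (a j)\<^sup>2) + (\<Sum>j\<in>T. (b j)\<^sup>2)) / 2"
proof -
  have "(\<Sum>j\<in>T. a j * b j) \<le> (\<Sum>j\<in>T. ((a j)\<^sup>2 + (b j)\<^sup>2) / 2)"
  proof (rule sum_mono)
    fix j have "0 \<le> (a j - b j)\<^sup>2" by simp
    thus "a j * b j \<le> ((a j)\<^sup>2 + (b j)\<^sup>2) / 2" by (simp add: power2_eq_square algebra_simps)
  qed
  also have "\<dots> = ((\<Sum>j\<in>T. (a j)\<^sup>2) + (\<Sum>j\<in>T. (b j)\<^sup>2)) / 2"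
    by (simp only: sum.distrib[symmetric] sum_divide_distrib[symmetric])
  finally show ?thesis .
qed

lemma sq_mono_from:
  fixes a b :: "nat \<Rightarrow> real"
  assumes "(\<Sum>j\<in>T. (a j)\<^sup>2) \<le> (\<Sum>j\<in>T. a j * b j)"
  shows "(\<Sum>j\<in>T. (a j)\<^sup>2) \<le> (\<Sum>j\<in>T. (b j)\<^sup>2)"
proof -
  have "(\<Sum>j\<in>T. a j * b j) \<le> ((\<Sum>j\<in>T. (a j)\<^sup>2) + (\<Sum>j\<in>T. (b j)\<^sup>2)) / 2" by (rule amgm_sum)
  moreover have aux: "\<And>x y z::real. x \<le> y \<Longrightarrow> y \<le> (x+z)/2 \<Longrightarrow> x \<le> z" by (simp add: field_simps)
  ultimately show ?thesis using assms by blast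
qed

lemma alg_facts:
  assumes "iAPD_ALS k s n A r \<epsilon> \<kappa> S U"
  shows "S 0 = {..<r}" "\<forall>i<s. stiefel (n i) {..<r} (U 0 i)"
    "\<forall>i. s \<le> i \<and> i < k \<longrightarrow> unitcols (n i) {..<r} (U 0 i)"
    "fobj k n A (S 0) (U 0) > 0" "0 < \<kappa>" "\<kappa> < sqrt (fobj k n A (S 0) (U 0) / real r)"
  using assms unfolding iAPD_ALS_def by blast+

lemma alg_step:
  assumes "iAPD_ALS k s n A r \<epsilon> \<kappa> S U" "p \<ge> 1"
  shows "\<forall>i<s. U p i \<in> Polar (n i) (S (p - 1)) (Xmat k n A U p i) \<or>
           U p i \<in> Polar (n i) (S (p - 1)) (\<lambda>j l. Xmat k n A U p i j l + \<epsilon> * U (p - 1) i j l)"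
    "S p = {j\<in>S (p - 1).
                 \<not> \<bar>\<Sum>l<n (s - 1). U p (s - 1) j l * Vcol k n A U p (s - 1) j l\<bar> < \<kappa>}"
    "\<forall>i. s \<le> i \<and> i < k \<longrightarrow>
           (\<forall>j\<in>S p. \<forall>l<n i.
              U p i j l = sgn (lam k n A U p i j) * Vcol k n A U p i j l
                           / vnorm (n i) (Vcol k n A U p i j))"
proof -
  have H: "(\<forall>i<s.
           (U p i \<in> Polar (n i) (S (p - 1)) (Xmat k n A U p i) \<and>
            \<not> min_eig (S (p - 1)) (gram (n i) (U p i) (Xmat k n A U p i)) < \<epsilon>)
         \<or> (\<exists>Q\<in>Polar (n i) (S (p - 1)) (Xmat k n A U p i).
              min_eig (S (p - 1)) (gram (n i) Q (Xmat k n A U p i)) < \<epsilon> \<and>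
              U p i \<in> Polar (n i) (S (p - 1))
                 (\<lambda>j l. Xmat k n A U p i j l + \<epsilon> * U (p - 1) i j l))) \<and>
        S p = {j\<in>S (p - 1).
                 \<not> \<bar>\<Sum>l<n (s - 1). U p (s - 1) j l * Vcol k n A U p (s - 1) j l\<bar> < \<kappa>} \<and>
        (\<forall>i. s \<le> i \<and> i < k \<longrightarrow>
           (\<forall>j\<in>S p. \<forall>l<n i.
              U p i j l = sgn (lam k n A U p i j) * Vcol k n A U p i j l
                           / vnorm (n i) (Vcol k n A U p i j)))"
    using assms unfolding iAPD_ALS_def by blast
  thus "\<forall>i<s. U p i \<in> Polar (n i) (S (p - 1)) (Xmat k n A U p i) \<or>
           U p i \<in> Polar (n i) (S (p - 1)) (\<lambda>j l. Xmat k n A U p i j l + \<epsilon> * U (p - 1) i j l)"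
    by blast
  from H show "S p = {j\<in>S (p - 1).
                 \<not> \<bar>\<Sum>l<n (s - 1). U p (s - 1) j l * Vcol k n A U p (s - 1) j l\<bar> < \<kappa>}" by blast
  from H show "\<forall>i. s \<le> i \<and> i < k \<longrightarrow>
           (\<forall>j\<in>S p. \<forall>l<n i.
              U p i j l = sgn (lam k n A U p i j) * Vcol k n A U p i j l
                           / vnorm (n i) (Vcol k n A U p i j))" by blast
qed

lemma S_sub: "iAPD_ALS k s n A r \<epsilon> \<kappa> S U \<Longrightarrow> S (Suc q) \<subseteq> S q"
proof -
  assume a: "iAPD_ALS k s n A r \<epsilon> \<kappa> S U"
  have "S (Suc q) = {j\<in>S q.
                 \<not> \<bar>\<Sum>l<n (s - 1). U (Suc q) (s - 1) j l * Vcol k n A U (Suc q) (s - 1) j l\<bar> < \<kappa>}"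
    using alg_step(2)[OF a, of "Suc q"] by simp
  thus ?thesis by (simp only: Collect_subset)
qed

lemma S_sub0: "iAPD_ALS k s n A r \<epsilon> \<kappa> S U \<Longrightarrow> S q \<subseteq> {..<r}"
proof (induction q)
  case 0 then show ?case using alg_facts(1)[OF 0] by simp
next
  case (Suc q)
  have "S q \<subseteq> {..<r}" using Suc.IH Suc.prems by simp
  then show ?case by (rule order_trans[OF S_sub[OF Suc.prems]])
qed

lemma S_fin: "iAPD_ALS k s n A r \<epsilon> \<kappa> S U \<Longrightarrow> finite (S q)"
  by (rule finite_subset[OF S_sub0]) simp_all

lemma stiefel_sub: "stiefel m T Q \<Longrightarrow> T' \<subseteq> T \<Longrightarrow> stiefel m T' Q"
  unfolding stiefel_def by (simp add: subset_iff)

lemma stiefel_inv: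
  assumes "iAPD_ALS k s n A r \<epsilon> \<kappa> S U" "i < s"
  shows "stiefel (n i) (S q) (U q i)"
proof (cases q)
  case 0 then show ?thesis using alg_facts(1,2)[OF assms(1)] assms(2) by simp
next
  case (Suc q')
  have "U q i \<in> Polar (n i) (S q') (Xmat k n A U q i) \<or>
           U q i \<in> Polar (n i) (S q') (\<lambda>j l. Xmat k n A U q i j l + \<epsilon> * U q' i j l)"
    using alg_step(1)[OF assms(1), of q] assms(2) Suc by simp
  hence st: "stiefel (n i) (S q') (U q i)" unfolding Polar_def by (elim disjE) simp_all
  have "S q \<subseteq> S q'" using S_sub[OF assms(1), of q'] Suc by simp
  thus ?thesis by (rule stiefel_sub[OF st])
qed

lemma frob_add: "frob m T Q (\<lambda>j l. X j l + e * Y j l) = frob m T Q X + e * frob m T Q Y"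
proof -
  have "(\<Sum>j\<in>T. \<Sum>l<m. Q j l * (X j l + e * Y j l))
      = (\<Sum>j\<in>T. (\<Sum>l<m. Q j l * X j l) + e * (\<Sum>l<m. Q j l * Y j l))"
    by (rule sum.cong[OF refl]) (simp add: distrib_left sum.distrib sum_distrib_left mult.left_commute)
  also have "\<dots> = (\<Sum>j\<in>T. \<Sum>l<m. Q j l * X j l) + e * (\<Sum>j\<in>T. \<Sum>l<m. Q j l * Y j l)"
    by (simp add: sum.distrib sum_distrib_left)
  finally show ?thesis unfolding frob_def .
qed

lemma frob_step:
  fixes e :: real
  assumes "stiefel m T Qo" "e > 0"
    "Qn \<in> Polar m T X \<or> Qn \<in> Polar m T (\<lambda>j l. X j l + e * Qo j l)"
  shows "frob m T Qo X \<le> frob m T Qn X"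
  using assms(3)
proof
  assume "Qn \<in> Polar m T X" thus ?thesis using assms(1) unfolding Polar_def by blast
next
  assume P: "Qn \<in> Polar m T (\<lambda>j l. X j l + e * Qo j l)"
  hence st: "stiefel m T Qn" unfolding Polar_def by blast
  have ge: "frob m T Qo (\<lambda>j l. X j l + e * Qo j l) \<le> frob m T Qn (\<lambda>j l. X j l + e * Qo j l)"
    using P assms(1) unfolding Polar_def by blast
  have oo: "frob m T Qo Qo = (\<Sum>j\<in>T. 1)"
    unfolding frob_def
  proof (rule sum.cong[OF refl])
    fix j assume "j \<in> T"
    thus "(\<Sum>l<m. Qo j l * Qo j l) = 1" using assms(1) unfolding stiefel_def by simp
  qed
  have no: "frob m T Qn Qo \<le> (\<Sum>j\<in>T. 1)"
    unfolding frob_def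
  proof (rule sum_mono)
    fix j assume j: "j \<in> T"
    have "(\<Sum>l<m. Qn j l * Qo j l) \<le> ((\<Sum>l<m. (Qn j l)\<^sup>2) + (\<Sum>l<m. (Qo j l)\<^sup>2)) / 2"
      by (rule amgm_sum)
    also have "\<dots> = 1" using j assms(1) st unfolding stiefel_def by (simp add: power2_eq_square)
    finally show "(\<Sum>l<m. Qn j l * Qo j l) \<le> 1" .
  qed
  have "e * frob m T Qn Qo \<le> e * frob m T Qo Qo" using no oo assms(2) by simp
  thus ?thesis using ge unfolding frob_add by linarith
qed

lemma frob_Xmat:
  "frob (n i) T Q (Xmat k n A U p i) = (\<Sum>j\<in>T. lam k n A U p i j * (\<Sum>l<n i. Q j l * Vcol k n A U p i j l))"
  unfolding frob_def Xmat_def by (simp add: sum_distrib_left ac_simps)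

lemma polar_chain:
  assumes "iAPD_ALS k s n A r \<epsilon> \<kappa> S U" "\<epsilon> > 0" "p \<ge> 1" "i < s" "s \<le> k"
  shows "(\<Sum>j\<in>S (p - 1). (lam k n A U p i j)\<^sup>2) \<le> (\<Sum>j\<in>S (p - 1). (lam k n A U p (Suc i) j)\<^sup>2)"
proof (rule sq_mono_from)
  have ik: "i < k" using assms by simp
  have st: "stiefel (n i) (S (p - 1)) (U (p - 1) i)" using stiefel_inv[OF assms(1) assms(4)] .
  have "frob (n i) (S (p - 1)) (U (p - 1) i) (Xmat k n A U p i) \<le> frob (n i) (S (p - 1)) (U p i) (Xmat k n A U p i)"
    using frob_step[OF st assms(2)] alg_step(1)[OF assms(1,3)] assms(4) by blast
  thus "(\<Sum>j\<in>S (p - 1). (lam k n A U p i j)\<^sup>2) \<le> (\<Sum>j\<in>S (p - 1). lam k n A U p i j * lam k n A U p (Suc i) j)"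
    unfolding frob_Xmat lam_Suc[OF ik] using lam_i[OF ik, of n A U p, symmetric]
    by (simp add: power2_eq_square)
qed


lemma power_unit:
  fixes v w :: "nat \<Rightarrow> real"
  assumes "\<forall>l<m. w l = \<sigma> * v l / vnorm m v" "\<bar>\<sigma>\<bar> \<le> 1"
  shows "(\<Sum>l<m. (w l)\<^sup>2) \<le> 1"
proof -
  define W where "W = (\<Sum>l<m. (v l)\<^sup>2)"
  have W0: "W \<ge> 0" unfolding W_def by (simp add: sum_nonneg)
  have vn: "vnorm m v = sqrt W" unfolding vnorm_def W_def ..
  have "(\<Sum>l<m. (w l)\<^sup>2) = (\<Sum>l<m. \<sigma>\<^sup>2 * (v l)\<^sup>2 / W)"
    using assms(1) vn W0 by (intro sum.cong) (auto simp: power_divide power_mult_distrib)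
  also have "\<dots> = \<sigma>\<^sup>2 * W / W" unfolding W_def by (simp add: sum_divide_distrib sum_distrib_left)
  also have "\<dots> \<le> 1"
  proof (cases "W = 0")
    case False
    have "\<sigma>\<^sup>2 \<le> 1" using assms(2) by (simp add: abs_le_square_iff[of \<sigma> 1, simplified])
    thus ?thesis using False by simp
  qed simp
  finally show ?thesis .
qed

lemma cs_unit:
  fixes u v :: "nat \<Rightarrow> real"
  assumes "(\<Sum>l<m. (u l)\<^sup>2) \<le> 1"
  shows "(\<Sum>l<m. u l * v l)\<^sup>2 \<le> (\<Sum>l<m. (v l)\<^sup>2)"
proof -
  define W where "W = (\<Sum>l<m. (v l)\<^sup>2)"
  define L where "L = (\<Sum>l<m. u l * v l)"
  have W0: "W \<ge> 0" unfolding W_def by (rule sum_nonneg) simp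
  show ?thesis
  proof (cases "W = 0")
    case True
    have "\<forall>l\<in>{..<m}. (v l)\<^sup>2 = 0"
      using True unfolding W_def by (subst sum_nonneg_eq_0_iff[symmetric]) simp_all
    hence "\<forall>l<m. v l = 0" by simp
    hence "L = 0" unfolding L_def by simp
    thus ?thesis unfolding L_def[symmetric] W_def[symmetric] using W0 by simp
  next
    case False
    define t where "t = sqrt W"
    have t0: "t > 0" using False W0 unfolding t_def by simp
    have tt: "t\<^sup>2 = W" using W0 unfolding t_def by simp
    have "(\<Sum>l<m. (v l / t)\<^sup>2) = (\<Sum>l<m. (v l)\<^sup>2 / t\<^sup>2)"
      by (simp add: power_divide)
    also have "\<dots> = W / t\<^sup>2" unfolding W_def by (rule sum_divide_distrib[symmetric])
    also have "\<dots> = 1" using tt False by simp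
    finally have vt: "(\<Sum>l<m. (v l / t)\<^sup>2) = 1" .
    have e: "(\<Sum>l<m. u l * (v l / t)) = L / t"
      unfolding L_def by (simp add: sum_divide_distrib)
    have e2: "(\<Sum>l<m. (- u l) * (v l / t)) = (- L) / t"
      unfolding L_def by (simp add: sum_divide_distrib sum_negf)
    have b2: "((\<Sum>l<m. (u l)\<^sup>2) + (\<Sum>l<m. (v l / t)\<^sup>2)) / 2 \<le> 1"
      using assms vt by simp
    have b2': "((\<Sum>l<m. (- u l)\<^sup>2) + (\<Sum>l<m. (v l / t)\<^sup>2)) / 2 \<le> 1"
      using assms vt by simp
    have a1: "L / t \<le> 1"
      using order_trans[OF amgm_sum[of u "\<lambda>l. v l / t" "{..<m}"] b2] unfolding e .
    have a2: "(- L) / t \<le> 1"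
      using order_trans[OF amgm_sum[of "\<lambda>l. - u l" "\<lambda>l. v l / t" "{..<m}"] b2'] unfolding e2 .
    have "L \<le> t" using a1 t0 by (simp add: pos_divide_le_eq)
    moreover have "- L \<le> 1 * t" using a2 by (simp only: pos_divide_le_eq[OF t0])
    ultimately have "\<bar>L\<bar> \<le> \<bar>t\<bar>" using t0 by simp
    hence "L\<^sup>2 \<le> t\<^sup>2" by (simp only: abs_le_square_iff)
    thus ?thesis unfolding L_def[symmetric] W_def[symmetric] using tt by simp
  qed
qed

lemma power_abs:
  fixes u v w :: "nat \<Rightarrow> real"
  assumes "(\<Sum>l<m. (u l)\<^sup>2) \<le> 1"
    "\<forall>l<m. w l = sgn (\<Sum>l<m. u l * v l) * v l / vnorm m v"
  shows "(\<Sum>l<m. u l * v l)\<^sup>2 \<le> (\<Sum>l<m. w l * v l)\<^sup>2"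
proof -
  define W where "W = (\<Sum>l<m. (v l)\<^sup>2)"
  define L where "L = (\<Sum>l<m. u l * v l)"
  have W0: "W \<ge> 0" unfolding W_def by (simp add: sum_nonneg)
  have cs: "L\<^sup>2 \<le> W" unfolding L_def W_def by (rule cs_unit[OF assms(1)])
  have vn: "vnorm m v = sqrt W" unfolding vnorm_def W_def ..
  have "(\<Sum>l<m. w l * v l) = (\<Sum>l<m. sgn L * (v l)\<^sup>2 / sqrt W)"
    using assms(2) vn unfolding L_def by (intro sum.cong) (auto simp: power2_eq_square)
  also have "\<dots> = sgn L * W / sqrt W" unfolding W_def by (simp add: sum_divide_distrib sum_distrib_left)
  finally have wv: "(\<Sum>l<m. w l * v l) = sgn L * W / sqrt W" .
  show ?thesis
  proof (cases "L = 0")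
    case True thus ?thesis unfolding L_def by simp
  next
    case False
    hence "L\<^sup>2 > 0" by simp
    hence Wp: "W > 0" using cs by linarith
    have sg: "(sgn L)\<^sup>2 = 1" using False by (simp add: sgn_if)
    have "(sgn L * W / sqrt W)\<^sup>2 = (sgn L)\<^sup>2 * W\<^sup>2 / W"
      using Wp by (simp add: power_divide power_mult_distrib)
    also have "\<dots> = W" using sg Wp by (simp add: power2_eq_square)
    finally have "(sgn L * W / sqrt W)\<^sup>2 = W" .
    thus ?thesis using cs wv unfolding L_def by simp
  qed
qed

lemma unit_inv:
  assumes "iAPD_ALS k s n A r \<epsilon> \<kappa> S U" "s \<le> i" "i < k" "j \<in> S q"
  shows "(\<Sum>l<n i. (U q i j l)\<^sup>2) \<le> 1"
proof (cases q)
  case 0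
  thus ?thesis using alg_facts(1,3)[OF assms(1)] assms(2,3,4) unfolding unitcols_def by simp
next
  case (Suc q')
  have "\<forall>l<n i. U q i j l = sgn (lam k n A U q i j) * Vcol k n A U q i j l
                           / vnorm (n i) (Vcol k n A U q i j)"
    using alg_step(3)[OF assms(1), of q] Suc assms(2,3,4) by simp
  thus ?thesis by (rule power_unit) (simp add: abs_sgn_eq)
qed

lemma power_chain:
  assumes "iAPD_ALS k s n A r \<epsilon> \<kappa> S U" "p \<ge> 1" "s \<le> i" "i < k" "j \<in> S p"
  shows "(lam k n A U p i j)\<^sup>2 \<le> (lam k n A U p (Suc i) j)\<^sup>2"
proof -
  have jp: "j \<in> S (p - 1)" using assms(5) S_sub[OF assms(1), of "p - 1"] assms(2) by auto
  have u: "(\<Sum>l<n i. (U (p - 1) i j l)\<^sup>2) \<le> 1" by (rule unit_inv[OF assms(1,3,4) jp])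
  have w: "\<forall>l<n i. U p i j l = sgn (\<Sum>l<n i. U (p - 1) i j l * Vcol k n A U p i j l) * Vcol k n A U p i j l
                           / vnorm (n i) (Vcol k n A U p i j)"
    using alg_step(3)[OF assms(1,2)] assms(3,4,5) lam_i[OF assms(4), of n A U p j] by simp
  show ?thesis
    unfolding lam_i[OF assms(4)] lam_Suc[OF assms(4)] by (rule power_abs[OF u w])
qed

lemma one_step:
  assumes alg: "iAPD_ALS k s n A r \<epsilon> \<kappa> S U" and "\<epsilon> > 0" "1 \<le> s" "s \<le> k" "p \<ge> 1"
  shows "fobj k n A (S (p - 1)) (U (p - 1)) - real (card (S (p - 1) - S p)) * \<kappa>\<^sup>2
         \<le> fobj k n A (S p) (U p)"
proof -
  let ?L = "lam k n A U p"
  have h0: "fobj k n A (S (p - 1)) (U (p - 1)) = (\<Sum>j\<in>S (p - 1). (?L 0 j)\<^sup>2)"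
  proof -
    have "\<And>j. xv U p 0 j = (\<lambda>m. U (p - 1) m j)" unfolding xv_def by auto
    thus ?thesis unfolding fobj_def lam_def by simp
  qed
  have h1: "(\<Sum>j\<in>S (p - 1). (?L 0 j)\<^sup>2) \<le> (\<Sum>j\<in>S (p - 1). (?L s j)\<^sup>2)"
    using le0[of s]
  proof (induction s rule: dec_induct)
    case base show ?case by simp
  next
    case (step x)
    have "(\<Sum>j\<in>S (p - 1). (?L x j)\<^sup>2) \<le> (\<Sum>j\<in>S (p - 1). (?L (Suc x) j)\<^sup>2)"
      by (rule polar_chain[OF alg assms(2,5) step(2) assms(4)])
    thus ?case using step(3) by linarith
  qed
  define K where "K = k"
  have sK: "s \<le> K" using assms(4) unfolding K_def .
  have h2': "(\<Sum>j\<in>S p. (?L s j)\<^sup>2) \<le> (\<Sum>j\<in>S p. (?L K j)\<^sup>2)"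
    using sK
  proof (induction K rule: dec_induct)
    case base show ?case by simp
  next
    case (step x)
    have "(\<Sum>j\<in>S p. (?L x j)\<^sup>2) \<le> (\<Sum>j\<in>S p. (?L (Suc x) j)\<^sup>2)"
    proof (rule sum_mono)
      fix j assume "j \<in> S p"
      moreover have "x < k" using step(2) unfolding K_def .
      ultimately show "(?L x j)\<^sup>2 \<le> (?L (Suc x) j)\<^sup>2"
        using power_chain[OF alg assms(5) step(1)] by blast
    qed
    thus ?case using step(3) by linarith
  qed
  have h2: "(\<Sum>j\<in>S p. (?L s j)\<^sup>2) \<le> (\<Sum>j\<in>S p. (?L k j)\<^sup>2)"
    using h2' unfolding K_def .
  have h3: "fobj k n A (S p) (U p) = (\<Sum>j\<in>S p. (?L k j)\<^sup>2)"
  proof -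
    have "\<And>j. contr k n A (xv U p k j) = contr k n A (\<lambda>m. U p m j)"
      by (rule contr_cong) (simp add: xv_def)
    thus ?thesis unfolding fobj_def lam_def by simp
  qed
  have sub: "S p \<subseteq> S (p - 1)" using S_sub[OF alg, of "p - 1"] assms(5) by simp
  have fin: "finite (S (p - 1))" by (rule S_fin[OF alg])
  have h4: "(\<Sum>j\<in>S (p - 1). (?L s j)\<^sup>2) = (\<Sum>j\<in>S (p - 1) - S p. (?L s j)\<^sup>2) + (\<Sum>j\<in>S p. (?L s j)\<^sup>2)"
    by (rule sum.subset_diff[OF sub fin])
  have s1: "Suc (s - 1) = s" using assms(3) by simp
  have sk: "s - 1 < k" using assms(3,4) by simp
  have h5: "(\<Sum>j\<in>S (p - 1) - S p. (?L s j)\<^sup>2) \<le> real (card (S (p - 1) - S p)) * \<kappa>\<^sup>2"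
  proof (rule sum_bounded_above)
    fix j assume j: "j \<in> S (p - 1) - S p"
    have "\<bar>\<Sum>l<n (s - 1). U p (s - 1) j l * Vcol k n A U p (s - 1) j l\<bar> < \<kappa>"
      using j alg_step(2)[OF alg assms(5)] by auto
    moreover have "?L s j = (\<Sum>l<n (s - 1). U p (s - 1) j l * Vcol k n A U p (s - 1) j l)"
      using lam_Suc[OF sk, of n A U p j] s1 by simp
    ultimately have "\<bar>?L s j\<bar> \<le> \<bar>\<kappa>\<bar>" by simp
    thus "(?L s j)\<^sup>2 \<le> \<kappa>\<^sup>2" by (simp add: abs_le_square_iff)
  qed
  show ?thesis using h0 h1 h2 h3 h4 h5 by linarith
qed

lemma lin_aux: "(x::real) - a \<le> y \<Longrightarrow> a = b - c \<Longrightarrow> f - r + b \<le> x \<Longrightarrow> f - r + c \<le> y"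
  by linarith

theorem proposition5p5:
  fixes k s r :: nat and n :: "nat \<Rightarrow> nat" and A :: "(nat \<Rightarrow> nat) \<Rightarrow> real"
    and \<epsilon> \<kappa> :: real
    and S :: "nat \<Rightarrow> nat set" and U :: "nat \<Rightarrow> nat \<Rightarrow> nat \<Rightarrow> nat \<Rightarrow> real"
  assumes "k \<ge> 3" and "1 \<le> s" and "s \<le> k"
    and "\<forall>i<k. n i \<ge> 1"
    and "\<forall>i<s. r \<le> n i"
    and "\<exists>idx\<in>idxs k n. A idx \<noteq> 0"
    and "\<epsilon> > 0"
    and "iAPD_ALS k s n A r \<epsilon> \<kappa> S U"
  shows "(\<exists>t N. 0 < t \<and> t \<le> r \<and> (\<forall>p\<ge>N. card (S p) = t)) \<and>
         (\<exists>N0. \<forall>p\<ge>N0. fobj k n A (S p) (U p) \<le> fobj k n A (S (Suc p)) (U (Suc p)))"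
proof -
  note alg = assms(8)
  define f0 where "f0 = fobj k n A (S 0) (U 0)"
  have f0p: "f0 > 0" and kp: "\<kappa> > 0" and kl: "\<kappa> < sqrt (f0 / real r)"
    using alg_facts(4,5,6)[OF alg] unfolding f0_def by auto
  have S0: "S 0 = {..<r}" by (rule alg_facts(1)[OF alg])
  have rp: "r > 0"
  proof (rule ccontr)
    assume "\<not> r > 0" hence "r = 0" by simp
    thus False using kl kp by simp
  qed
  have "\<kappa>\<^sup>2 < f0 / real r"
  proof -
    have "\<kappa>\<^sup>2 < (sqrt (f0 / real r))\<^sup>2" using kl kp by (intro power_strict_mono) auto
    thus ?thesis using f0p rp by simp
  qed
  hence rk: "real r * \<kappa>\<^sup>2 < f0" using rp by (simp add: field_simps)
  have fin: "\<And>q. finite (S q)" by (rule S_fin[OF alg])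
  have bound: "f0 - real r * \<kappa>\<^sup>2 + real (card (S p)) * \<kappa>\<^sup>2 \<le> fobj k n A (S p) (U p)" for p
  proof (induction p)
    case 0 thus ?case using S0 unfolding f0_def by simp
  next
    case (Suc p)
    have st: "fobj k n A (S p) (U p) - real (card (S p - S (Suc p))) * \<kappa>\<^sup>2 \<le> fobj k n A (S (Suc p)) (U (Suc p))"
      using one_step[OF alg assms(7,2,3), of "Suc p"] by simp
    have sb: "S (Suc p) \<subseteq> S p" by (rule S_sub[OF alg])
    have "card (S p - S (Suc p)) = card (S p) - card (S (Suc p))"
      by (rule card_Diff_subset[OF finite_subset[OF sb fin] sb])
    moreover have "card (S (Suc p)) \<le> card (S p)" by (rule card_mono[OF fin sb])
    ultimately have "real (card (S p - S (Suc p))) = real (card (S p)) - real (card (S (Suc p)))"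
      by simp
    hence eq: "real (card (S p - S (Suc p))) * \<kappa>\<^sup>2 = real (card (S p)) * \<kappa>\<^sup>2 - real (card (S (Suc p))) * \<kappa>\<^sup>2"
      by (simp add: left_diff_distrib)
    show ?case by (rule lin_aux[OF st eq Suc.IH])
  qed
  have nonempty: "card (S p) > 0" for p
  proof (rule ccontr)
    assume "\<not> card (S p) > 0"
    hence "S p = {}" using fin[of p] by simp
    hence "fobj k n A (S p) (U p) = 0" unfolding fobj_def by simp
    thus False using bound[of p] rk \<open>S p = {}\<close> by simp
  qed
  obtain N where N: "\<forall>q. card (S N) \<le> card (S q)"
    using ex_has_least_nat[of "\<lambda>_. True" 0 "\<lambda>q. card (S q)"] by auto
  have subN: "S p \<subseteq> S N" if "N \<le> p" for p
    using that
  proof (induction p rule: dec_induct)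
    case base show ?case by simp
  next
    case (step x) thus ?case using S_sub[OF alg, of x] by blast
  qed
  have eqN: "S p = S N" if "N \<le> p" for p
    using card_subset_eq[OF fin subN[OF that]] N by (meson le_antisym card_mono fin subN that)
  have c1: "0 < card (S N)" by (rule nonempty)
  have c2: "card (S N) \<le> r" using S_sub0[OF alg, of N] card_mono[of "{..<r}" "S N"] by simp
  have c3: "\<forall>p\<ge>N. card (S p) = card (S N)"
  proof (intro allI impI)
    fix p assume "N \<le> p"
    hence "S p = S N" by (rule eqN)
    thus "card (S p) = card (S N)" by simp
  qed
  have part1: "\<exists>t N. 0 < t \<and> t \<le> r \<and> (\<forall>p\<ge>N. card (S p) = t)"
    using c1 c2 c3 by blast
  have part2: "\<forall>p\<ge>N. fobj k n A (S p) (U p) \<le> fobj k n A (S (Suc p)) (U (Suc p))"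
  proof (intro allI impI)
    fix p assume "N \<le> p"
    hence e1: "S p = S N" by (rule eqN)
    have "N \<le> Suc p" using \<open>N \<le> p\<close> by simp
    hence e2: "S (Suc p) = S N" by (rule eqN)
    from e1 e2 have "S (Suc p) = S p" by simp
    thus "fobj k n A (S p) (U p) \<le> fobj k n A (S (Suc p)) (U (Suc p))"
      using one_step[OF alg assms(7,2,3), of "Suc p"] by simp
  qed
  from part1 part2 show ?thesis by blast
qed

end
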